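(* Let $n\ge2$ and let $H$ be a subgraph of the complete graph $K_n$ on vertex set $\{1,\dots,n\}$. Let $H^*$ be the subgraph of the shift graph $S_n$ induced by the vertices $(a,b)$, $a<b$, such that $\{a,b\}$ is an edge of $H$. Then (1) $\chi(H^* )\ge\log_2\chi(H)$, and (2) the odd-girth of $H^*$ is strictly larger than the odd-girth of $H$.
   Context: The shift graph $S_n$ has vertex set $\{(a,b):1\le a<b\le n\}$, two vertices $(a,b)$ and $(a',b')$ adjacent if and only if $b=a'$ or $b'=a$. The odd-girth of a graph is the length of its shortest odd cycle (infinite if bipartite); the convention is that infinity is strictly larger than infinity is not needed, i.e., if $H$ is bipartite then $H^*$ is bipartite. *)

theory Defs
  imports Complex_Main "HOL-Library.Extended_Nat"
begin

text \<open>A graph is given by a vertex set V and a symmetric adjacency relation adj.\<close>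

definition proper_colouring :: "'a set \<Rightarrow> ('a \<Rightarrow> 'a \<Rightarrow> bool) \<Rightarrow> nat \<Rightarrow> ('a \<Rightarrow> nat) \<Rightarrow> bool" where
  "proper_colouring V adj k c \<longleftrightarrow>
     (\<forall>v\<in>V. c v < k) \<and> (\<forall>u\<in>V. \<forall>v\<in>V. adj u v \<longrightarrow> c u \<noteq> c v)"

definition chromatic_number :: "'a set \<Rightarrow> ('a \<Rightarrow> 'a \<Rightarrow> bool) \<Rightarrow> nat" where
  "chromatic_number V adj = (LEAST k. \<exists>c. proper_colouring V adj k c)"

definition is_cycle :: "'a set \<Rightarrow> ('a \<Rightarrow> 'a \<Rightarrow> bool) \<Rightarrow> 'a list \<Rightarrow> bool" where
  "is_cycle V adj vs \<longleftrightarrow> length vs \<ge> 3 \<and> distinct vs \<and> set vs \<subseteq> V \<and>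
     (\<forall>i < length vs. adj (vs ! i) (vs ! ((i + 1) mod length vs)))"

text \<open>Odd girth: length of a shortest odd cycle; infinity (Inf of the empty set) if none.\<close>
definition odd_girth :: "'a set \<Rightarrow> ('a \<Rightarrow> 'a \<Rightarrow> bool) \<Rightarrow> enat" where
  "odd_girth V adj = Inf {enat (length vs) | vs. is_cycle V adj vs \<and> odd (length vs)}"

text \<open>Subgraph H of K_n on {1..n}, given by its edge set E.\<close>
definition H_adj :: "nat set set \<Rightarrow> nat \<Rightarrow> nat \<Rightarrow> bool" where
  "H_adj E u v \<longleftrightarrow> {u, v} \<in> E \<and> u \<noteq> v"

definition shift_adj :: "nat \<times> nat \<Rightarrow> nat \<times> nat \<Rightarrow> bool" where
  "shift_adj x y \<longleftrightarrow> snd x = fst y \<or> snd y = fst x"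

definition Hstar_verts :: "nat set set \<Rightarrow> (nat \<times> nat) set" where
  "Hstar_verts E = {(a, b). a < b \<and> {a, b} \<in> E}"

end

theory Submission imports Defs begin

lemma closed_walk_cycle:
  assumes irr: "\<And>u. \<not> adj u u" and inV: "\<And>u v. adj u v \<Longrightarrow> u \<in> V"
  shows "length ws \<ge> 2 \<Longrightarrow> hd ws = last ws \<Longrightarrow> successively adj ws \<Longrightarrow> odd (length ws - 1)
     \<Longrightarrow> \<exists>vs. is_cycle V adj vs \<and> odd (length vs) \<and> length vs \<le> length ws - 1"
proof (induction "length ws" arbitrary: ws rule: less_induct)
  case less
  show ?case
  proof (cases "distinct (butlast ws)")
    case True
    define vs where "vs = butlast ws"
    have ws: "ws = vs @ [last ws]" using less.prems(1) unfolding vs_def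
      by (metis append_butlast_last_id list.size(3) not_numeral_le_zero)
    have lv: "length vs = length ws - 1" unfolding vs_def by simp
    have vne: "vs \<noteq> []" using lv less.prems(1) by auto
    have hv: "last ws = vs ! 0" using less.prems(2) ws vne
      by (metis hd_append2 hd_conv_nth)
    have nth: "ws ! j = vs ! (j mod length vs)" if "j \<le> length vs" for j
    proof (cases "j = length vs")
      case True then show ?thesis using hv ws by (metis mod_self nth_append_length)
    next
      case False then show ?thesis using that by (subst ws) (simp add: nth_append)
    qed
    have step: "adj (vs ! i) (vs ! ((i + 1) mod length vs))" if "i < length vs" for i
    proof -
      have "adj (ws ! i) (ws ! Suc i)" using successively_nth[OF less.prems(3)] that lv less.prems(1) by simp
      moreover have "ws ! i = vs ! i" using nth[of i] that by simp
      moreover have "ws ! Suc i = vs ! ((i + 1) mod length vs)" using nth[of "Suc i"] that by simp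
      ultimately show ?thesis by simp
    qed
    have "length vs \<noteq> 1"
    proof
      assume "length vs = 1"
      then show False using step[of 0] irr by simp
    qed
    hence "length vs \<ge> 3" using less.prems(4) lv vne
      by (metis One_nat_def Suc_1 Suc_leI le_neq_implies_less length_greater_0_conv numeral_3_eq_3 odd_two_times_div_two_nat
          dvd_refl less_2_cases_iff not_less_eq_eq)
    moreover have "set vs \<subseteq> V"
    proof
      fix x assume "x \<in> set vs"
      then obtain i where "i < length vs" "x = vs ! i" by (metis in_set_conv_nth)
      then show "x \<in> V" using step inV by blast
    qed
    ultimately have "is_cycle V adj vs" unfolding is_cycle_def using True step vs_def by auto
    then show ?thesis using lv less.prems(4) by auto
  next
    case False
    then obtain a v b c where d: "butlast ws = a @ [v] @ b @ [v] @ c" using not_distinct_decomp by blast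
    define l where "l = last ws"
    have ws: "ws = a @ v # b @ v # c @ [l]" using d less.prems(1) unfolding l_def
      by (metis append_Cons append_assoc append_butlast_last_id append_self_conv2 list.size(3) not_numeral_le_zero)
    define w1 where "w1 = v # b @ [v]"
    define w2 where "w2 = a @ v # c @ [l]"
    have s1: "successively adj w1"
    proof -
      have "successively adj (a @ w1 @ (c @ [l]))" using less.prems(3) unfolding w1_def by (subst (asm) ws) simp
      then show ?thesis unfolding successively_append_iff by blast
    qed
    have sA: "successively adj (a @ [v])"
    proof -
      have "successively adj ((a @ [v]) @ (b @ v # c @ [l]))" using less.prems(3) by (subst (asm) ws) simp
      then show ?thesis unfolding successively_append_iff by blast
    qed
    have sB: "successively adj (v # c @ [l])"
    proof -
      have "successively adj ((a @ v # b) @ (v # c @ [l]))" using less.prems(3) by (subst (asm) ws) simp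
      then show ?thesis unfolding successively_append_iff by blast
    qed
    have sB2: "successively adj (c @ [l]) \<and> adj v (hd (c @ [l]))" using sB by (simp add: successively_Cons)
    have "w2 = (a @ [v]) @ (c @ [l])" unfolding w2_def by simp
    hence s2: "successively adj w2" using sA sB2 by (simp only: successively_append_iff) simp
    have s: "successively adj w1 \<and> successively adj w2" using s1 s2 by simp
    have h1: "hd w1 = last w1" unfolding w1_def by simp
    have "hd w2 = hd ws" by (subst ws) (cases a, auto simp: w2_def)
    hence h2: "hd w2 = last w2" using less.prems(2) l_def by (simp add: w2_def)
    have len: "length ws - 1 = (length w1 - 1) + (length w2 - 1)" unfolding w1_def w2_def by (subst ws) simp
    have lt: "length w1 < length ws" "length w2 < length ws" unfolding w1_def w2_def by (subst ws, simp)+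
    have ge: "length w1 \<ge> 2" "length w2 \<ge> 2" unfolding w1_def w2_def by auto
    show ?thesis
    proof (cases "odd (length w1 - 1)")
      case True
      from less.hyps[OF lt(1) ge(1) h1 _ True] s obtain vs where
        "is_cycle V adj vs \<and> odd (length vs) \<and> length vs \<le> length w1 - 1" by blast
      then show ?thesis using len by (metis le_add1 order_trans)
    next
      case False
      hence "odd (length w2 - 1)" using len less.prems(4) by auto
      from less.hyps[OF lt(2) ge(2) h2 _ this] s obtain vs where
        "is_cycle V adj vs \<and> odd (length vs) \<and> length vs \<le> length w2 - 1" by blast
      then show ?thesis using len by (metis le_add2 order_trans)
    qed
  qed
qed


fun mv :: "'a list \<Rightarrow> nat" where
  "mv (x # y # r) = (if x \<noteq> y then 1 else 0) + mv (y # r)"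
| "mv _ = 0"

lemma mv_Cons: "mv (z # ys) = (if ys \<noteq> [] \<and> z \<noteq> hd ys then 1 else 0) + mv ys"
  by (cases ys) auto

lemma mv_del: "mv (a @ x # x # b) = mv (a @ x # b)"
  by (induction a) (auto simp: mv_Cons hd_append)

lemma mv_app1: "mv (xs @ [y]) = mv xs + (if xs \<noteq> [] \<and> last xs \<noteq> y then 1 else 0)"
  by (induction xs) (auto simp: mv_Cons hd_append)

lemma mv_distinct: "successively (\<noteq>) ws \<Longrightarrow> mv ws = length ws - 1"
  by (induction ws) (auto simp: mv_Cons successively_Cons)

lemma lazy_walk:
  "ws \<noteq> [] \<Longrightarrow> hd ws = last ws \<Longrightarrow> successively (\<lambda>u v. u = v \<or> adj u v) ws
   \<Longrightarrow> \<exists>ws'. length ws' = mv ws + 1 \<and> hd ws' = last ws' \<and> successively adj ws'"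
proof (induction "length ws" arbitrary: ws rule: less_induct)
  case less
  show ?case
  proof (cases "\<exists>a x b. ws = a @ x # x # b")
    case True
    then obtain a x b where ws: "ws = a @ x # x # b" by blast
    define w where "w = a @ x # b"
    have "successively (\<lambda>u v. u = v \<or> adj u v) w"
      using less.prems(3) unfolding ws w_def
      by (auto simp: successively_append_iff successively_Cons)
    moreover have "hd w = last w" using less.prems(2) unfolding ws w_def
      by (cases a; cases b) auto
    moreover have "length w < length ws" "w \<noteq> []" unfolding ws w_def by auto
    ultimately show ?thesis using less.hyps[of w] mv_del[of a x b] unfolding ws w_def by auto
  next
    case False
    have ne: "ws ! i \<noteq> ws ! Suc i" if "Suc i < length ws" for i
    proof
      assume "ws ! i = ws ! Suc i"
      moreover have "ws = take i ws @ ws ! i # ws ! Suc i # drop (Suc (Suc i)) ws"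
        using that by (metis Cons_nth_drop_Suc Suc_lessD append_take_drop_id)
      ultimately show False using False by metis
    qed
    have "successively (\<noteq>) ws" using ne by (simp add: successively_conv_nth)
    hence "mv ws = length ws - 1" by (rule mv_distinct)
    moreover have "successively adj ws" using ne less.prems(3)
      unfolding successively_conv_nth by blast
    ultimately show ?thesis using less.prems(1,2) by (intro exI[of _ ws]) auto
  qed
qed


lemma card_Suc_split:
  "card {i. i < Suc k \<and> Q i} = card {i. i < k \<and> Q i} + (if Q k then 1 else 0)"
proof -
  have "{i. i < Suc k \<and> Q i} = (if Q k then insert k {i. i < k \<and> Q i} else {i. i < k \<and> Q i})"
    by (auto simp: less_Suc_eq)
  moreover have "finite {i. i < k \<and> Q i}" by simp
  ultimately show ?thesis by (simp add: card_insert_if)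
qed

lemma mv_map: "mv (map p [0..<Suc k]) = card {i. i < k \<and> p i \<noteq> p (Suc i)}"
proof (induction k)
  case 0 then show ?case by simp
next
  case (Suc k)
  have "map p [0..<Suc (Suc k)] = map p [0..<Suc k] @ [p (Suc k)]" by simp
  then show ?case using Suc by (simp only: mv_app1 card_Suc_split) (simp add: last_map)
qed

lemma parity_changes: "even (card {i. i < k \<and> d i \<noteq> d (Suc i)}) \<longleftrightarrow> (d 0 = (d k :: bool))"
proof (induction k)
  case 0 then show ?case by simp
next
  case (Suc k) then show ?case by (simp only: card_Suc_split) auto
qed

lemma card_partition_lt: "card {i. i < k \<and> Q i} + card {i. i < k \<and> \<not> Q i} = k"
proof -
  have "{i. i < k \<and> Q i} \<union> {i. i < k \<and> \<not> Q i} = {..<k}" by auto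
  moreover have "{i. i < k \<and> Q i} \<inter> {i. i < k \<and> \<not> Q i} = {}" by auto
  moreover have "card ({i. i < k \<and> Q i} \<union> {i. i < k \<and> \<not> Q i}) = card {i. i < k \<and> Q i} + card {i. i < k \<and> \<not> Q i}"
    by (rule card_Un_disjoint) (auto simp: calculation(2))
  ultimately show ?thesis by simp
qed

lemma odd_part: "a + b = (L::nat) \<Longrightarrow> even b \<Longrightarrow> odd L \<Longrightarrow> odd a"
  by presburger

context
  fixes n :: nat and E :: "nat set set"
  assumes Esub: "E \<subseteq> {{a, b} | a b. 1 \<le> a \<and> a < b \<and> b \<le> n}"
begin

lemma H_in: "H_adj E u v \<Longrightarrow> u \<in> {1..n}"
proof -
  assume "H_adj E u v"
  hence "{u, v} \<in> E" unfolding H_adj_def by simp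
  then obtain a b where ab: "{u, v} = {a, b}" "1 \<le> a" "a < b" "b \<le> n" using Esub by blast
  hence "u = a \<or> u = b" by (metis insertCI insertE singletonD)
  then show ?thesis using ab by auto
qed

lemma H_irr: "\<not> H_adj E u u" unfolding H_adj_def by simp

lemma star_cycle_to_H:
  assumes cyc: "is_cycle (Hstar_verts E) shift_adj xs" and odd: "odd (length xs)"
  shows "\<exists>vs. is_cycle {1..n} (H_adj E) vs \<and> odd (length vs) \<and> length vs < length xs"
proof -
  define L where "L = length xs"
  have L3: "L \<ge> 3" using cyc unfolding is_cycle_def L_def by simp
  define X where "X i = xs ! (i mod L)" for i
  have F1: "fst (X i) < snd (X i) \<and> {fst (X i), snd (X i)} \<in> E" for i
  proof -
    have "i mod L < L" using L3 by simp
    hence "X i \<in> Hstar_verts E" using cyc unfolding is_cycle_def X_def L_def by auto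
    then show ?thesis unfolding Hstar_verts_def by auto
  qed
  have F2: "shift_adj (X i) (X (Suc i))" for i
  proof -
    have "i mod L < L" using L3 by simp
    hence "shift_adj (xs ! (i mod L)) (xs ! ((i mod L + 1) mod L))" using cyc unfolding is_cycle_def L_def by auto
    then show ?thesis unfolding X_def by (simp add: mod_Suc_eq)
  qed
  have per: "X (i + L) = X i" for i unfolding X_def by simp
  define dir where "dir i = (snd (X i) = fst (X (Suc i)))" for i
  define p where "p i = (if dir i then snd (X i) else fst (X i))" for i
  have F2': "\<not> dir i \<Longrightarrow> snd (X (Suc i)) = fst (X i)" for i using F2[of i] unfolding dir_def shift_adj_def by auto
  have step: "p i = p (Suc i) \<or> H_adj E (p i) (p (Suc i))" for i
  proof -
    have a: "p i = fst (X (Suc i)) \<or> p i = snd (X (Suc i))" unfolding p_def using F2'[of i] dir_def by auto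
    have b: "p (Suc i) = fst (X (Suc i)) \<or> p (Suc i) = snd (X (Suc i))" unfolding p_def by auto
    show ?thesis
    proof (cases "p i = p (Suc i)")
      case False
      hence "{p i, p (Suc i)} = {fst (X (Suc i)), snd (X (Suc i))}"
        using a b by (elim disjE) (simp_all add: insert_commute)
      then show ?thesis using False F1[of "Suc i"] unfolding H_adj_def by simp
    qed simp
  qed
  have mvchar: "p i \<noteq> p (Suc i) \<longleftrightarrow> dir i = dir (Suc i)" for i
  proof -
    have e1: "p i = (if dir i then fst (X (Suc i)) else snd (X (Suc i)))"
      unfolding p_def using F2'[of i] by (simp add: dir_def)
    have e2: "p (Suc i) = (if dir (Suc i) then snd (X (Suc i)) else fst (X (Suc i)))"
      unfolding p_def by simp
    have lt: "fst (X (Suc i)) < snd (X (Suc i))" using F1[of "Suc i"] by simp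
    show ?thesis using lt unfolding e1 e2 by (cases "dir i"; cases "dir (Suc i)") simp_all
  qed
  define ps where "ps = map p [0..<Suc L]"
  have mvps: "mv ps = card {i. i < L \<and> dir i = dir (Suc i)}"
    unfolding ps_def mv_map using mvchar by simp
  have dirL: "dir L = dir 0" unfolding dir_def using per[of 0] per[of 1] by simp
  have ev: "even (card {i. i < L \<and> dir i \<noteq> dir (Suc i)})" using parity_changes[of L dir] dirL by simp
  have part: "card {i. i < L \<and> dir i = dir (Suc i)} + card {i. i < L \<and> dir i \<noteq> dir (Suc i)} = L"
    using card_partition_lt[of L "\<lambda>i. dir i = dir (Suc i)"] by simp
  have oddL: "odd L" using odd unfolding L_def .
  have oddmv: "odd (mv ps)" unfolding mvps using odd_part[OF part ev oddL] .
  have nz: "card {i. i < L \<and> dir i \<noteq> dir (Suc i)} \<noteq> 0"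
  proof
    assume "card {i. i < L \<and> dir i \<noteq> dir (Suc i)} = 0"
    hence same: "\<forall>i<L. dir i = dir (Suc i)" by auto
    have dk: "k \<le> L \<Longrightarrow> dir k = dir 0" for k
      by (induction k) (use same in auto)
    show False
    proof (cases "dir 0")
      case True
      have "k \<le> L \<Longrightarrow> fst (X 0) + k \<le> fst (X k)" for k
      proof (induction k)
        case 0 then show ?case by simp
      next
        case (Suc k)
        have "dir k" using dk[of k] Suc.prems True by simp
        hence "fst (X k) < fst (X (Suc k))" using F1[of k] unfolding dir_def by simp
        then show ?case using Suc by simp
      qed
      from this[of L] show False using per[of 0] L3 by simp
    next
      case False
      have "k \<le> L \<Longrightarrow> fst (X k) + k \<le> fst (X 0)" for k
      proof (induction k)
        case 0 then show ?case by simp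
      next
        case (Suc k)
        have "\<not> dir k" using dk[of k] Suc.prems False by simp
        hence "fst (X (Suc k)) < fst (X k)" using F1[of "Suc k"] F2'[of k] by simp
        then show ?case using Suc by simp
      qed
      from this[of L] show False using per[of 0] L3 by simp
    qed
  qed
  have mvlt: "mv ps < L" using mvps part nz by linarith
  have "p L = p 0" unfolding p_def dir_def using per[of 0] per[of 1] by simp
  moreover have "hd ps = p 0" unfolding ps_def by (simp add: hd_map hd_upt del: upt_Suc)
  moreover have "last ps = p L" unfolding ps_def by (simp add: last_map last_upt del: upt_Suc)
  ultimately have hl: "hd ps = last ps" by simp
  have lps: "length ps = Suc L" unfolding ps_def by simp
  have psn: "ps ! j = p j" if "j < Suc L" for j unfolding ps_def using that by (simp del: upt_Suc)
  have sps: "successively (\<lambda>u v. u = v \<or> H_adj E u v) ps"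
    unfolding successively_conv_nth
  proof (intro allI impI)
    fix i assume "Suc i < length ps"
    then show "ps ! i = ps ! Suc i \<or> H_adj E (ps ! i) (ps ! Suc i)"
      using psn[of i] psn[of "Suc i"] step[of i] lps by simp
  qed
  obtain ws where ws: "length ws = mv ps + 1" "hd ws = last ws" "successively (H_adj E) ws"
    using lazy_walk[OF _ hl sps] unfolding ps_def by auto
  have "length ws \<ge> 2" using ws(1) oddmv by presburger
  hence "\<exists>vs. is_cycle {1..n} (H_adj E) vs \<and> odd (length vs) \<and> length vs \<le> length ws - 1"
    using ws(2,3) oddmv ws(1) by (intro closed_walk_cycle[of "H_adj E" "{1..n}" ws] H_irr H_in) auto
  with ws(1) obtain vs where "is_cycle {1..n} (H_adj E) vs" "odd (length vs)" "length vs \<le> mv ps" by auto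
  then show ?thesis using mvlt unfolding L_def by (intro exI[of _ vs]) auto
qed

end

lemma part1:
  fixes n :: nat and E :: "nat set set"
  assumes Esub: "E \<subseteq> {{a, b} | a b. 1 \<le> a \<and> a < b \<and> b \<le> n}"
  shows "real (chromatic_number (Hstar_verts E) shift_adj)
           \<ge> log 2 (real (chromatic_number {1..n} (H_adj E)))"
proof -
  define k where "k = chromatic_number (Hstar_verts E) shift_adj"
  have bnd: "a \<le> n" if "(a, b) \<in> Hstar_verts E" for a b
  proof -
    from that have "{a, b} \<in> E" unfolding Hstar_verts_def by auto
    then obtain a' b' where ab: "{a, b} = {a', b'}" "a' < b'" "b' \<le> n" using Esub by blast
    hence "a = a' \<or> a = b'" by (metis insertCI insertE singletonD)
    then show ?thesis using ab by auto
  qed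
  have "proper_colouring (Hstar_verts E) shift_adj (Suc n) fst"
    unfolding proper_colouring_def
  proof (intro conjI ballI impI)
    fix v assume "v \<in> Hstar_verts E" then show "fst v < Suc n" using bnd by (cases v) force
  next
    fix u v assume "u \<in> Hstar_verts E" "v \<in> Hstar_verts E" "shift_adj u v"
    then show "fst u \<noteq> fst v" unfolding Hstar_verts_def shift_adj_def by auto
  qed
  hence "\<exists>c. proper_colouring (Hstar_verts E) shift_adj k c"
    unfolding k_def chromatic_number_def using LeastI_ex[of "\<lambda>k. \<exists>c. proper_colouring (Hstar_verts E) shift_adj k c"] by blast
  then obtain c where c: "proper_colouring (Hstar_verts E) shift_adj k c" by blast
  define S where "S v = {c (v, w) | w. (v, w) \<in> Hstar_verts E}" for v
  have Sk: "S v \<in> Pow {..<k}" for v using c unfolding S_def proper_colouring_def by auto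
  have "\<exists>f. bij_betw f (Pow {..<k}) {..<2^k :: nat}"
    by (subst bij_betw_iff_card) (auto simp: card_Pow)
  then obtain f where f: "bij_betw f (Pow {..<k}) {..<2^k :: nat}" by blast
  have Sne: "S u \<noteq> S v" if "u < v" "{u, v} \<in> E" for u v
  proof
    assume eq: "S u = S v"
    have uv: "(u, v) \<in> Hstar_verts E" using that unfolding Hstar_verts_def by auto
    hence "c (u, v) \<in> S v" using eq unfolding S_def by auto
    then obtain w where w: "(v, w) \<in> Hstar_verts E" "c (u, v) = c (v, w)" unfolding S_def by auto
    have "shift_adj (u, v) (v, w)" unfolding shift_adj_def by simp
    then show False using c uv w unfolding proper_colouring_def by blast
  qed
  have "proper_colouring {1..n} (H_adj E) (2^k) (\<lambda>v. f (S v))"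
    unfolding proper_colouring_def
  proof (intro conjI ballI impI)
    fix v show "f (S v) < 2^k" using f Sk bij_betwE by blast
  next
    fix u v assume "H_adj E u v"
    hence "S u \<noteq> S v" unfolding H_adj_def using Sne
      by (metis insert_commute linorder_neqE_nat)
    then show "f (S u) \<noteq> f (S v)" using f Sk unfolding bij_betw_def inj_on_def by blast
  qed
  hence chi: "chromatic_number {1..n} (H_adj E) \<le> 2^k"
    unfolding chromatic_number_def by (intro Least_le) blast
  show ?thesis
  proof (cases "chromatic_number {1..n} (H_adj E) = 0")
    case True then show ?thesis by (simp add: log_def)
  next
    case False
    have "log 2 (real (chromatic_number {1..n} (H_adj E))) \<le> log 2 (2 ^ k)"
      using chi False by (subst log_le_cancel_iff) (auto simp del: of_nat_power simp: of_nat_power[symmetric])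
    also have "\<dots> = real k" by simp
    finally show ?thesis unfolding k_def .
  qed
qed

theorem mainTheorem13:
  fixes n :: nat and E :: "nat set set"
  assumes "n \<ge> 2"
    and "E \<subseteq> {{a, b} | a b. 1 \<le> a \<and> a < b \<and> b \<le> n}"
  shows "real (chromatic_number (Hstar_verts E) shift_adj)
           \<ge> log 2 (real (chromatic_number {1..n} (H_adj E)))
         \<and> (odd_girth {1..n} (H_adj E) = \<infinity> \<longrightarrow> odd_girth (Hstar_verts E) shift_adj = \<infinity>)
         \<and> (odd_girth {1..n} (H_adj E) \<noteq> \<infinity> \<longrightarrow>
              odd_girth {1..n} (H_adj E) < odd_girth (Hstar_verts E) shift_adj)"
proof -
  define SH where "SH = {enat (length vs) | vs. is_cycle {1..n} (H_adj E) vs \<and> odd (length vs)}"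
  define SS where "SS = {enat (length vs) | vs. is_cycle (Hstar_verts E) shift_adj vs \<and> odd (length vs)}"
  have key: "\<exists>y\<in>SH. y < x" if "x \<in> SS" for x
  proof -
    from that obtain xs where xs: "x = enat (length xs)" "is_cycle (Hstar_verts E) shift_adj xs" "odd (length xs)"
      unfolding SS_def by blast
    from star_cycle_to_H[OF assms(2) xs(2,3)] obtain vs where
      "is_cycle {1..n} (H_adj E) vs" "odd (length vs)" "length vs < length xs" by blast
    then show ?thesis unfolding SH_def using xs(1) by auto
  qed
  have g: "odd_girth {1..n} (H_adj E) = Inf SH" "odd_girth (Hstar_verts E) shift_adj = Inf SS"
    unfolding odd_girth_def SH_def SS_def by simp_all
  have fin: "y \<noteq> \<infinity>" if "y \<in> SH" for y using that unfolding SH_def by auto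
  have A: "Inf SS = \<infinity>" if "Inf SH = \<infinity>"
  proof -
    have "SH = {}"
    proof (rule ccontr)
      assume "SH \<noteq> {}"
      then obtain y where "y \<in> SH" by blast
      then show False using Inf_lower[of y SH] fin[of y] that by auto
    qed
    hence "SS = {}" using key by blast
    then show ?thesis by (simp add: top_enat_def)
  qed
  have B: "Inf SH < Inf SS" if "Inf SH \<noteq> \<infinity>"
  proof (cases "SS = {}")
    case True then show ?thesis using that by (simp add: top_enat_def)
  next
    case False
    then obtain x where "x \<in> SS" by blast
    hence "Inf SS \<in> SS" by (rule wellorder_InfI)
    then obtain y where "y \<in> SH" "y < Inf SS" using key by blast
    then show ?thesis using Inf_lower[of y SH] by (meson order_le_less_trans)
  qed
  show ?thesis using part1[OF assms(2)] A B g by auto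
qed

end
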